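(* Let $Y,Y'\in\mathfrak o(V,K)$. The special tuples $(Y,e_{n+2})$ and $(Y',e_{n+2})$ are equivalent if and only if there exist $P\in O(V,K)_{e_{n+2}}$ and a vector $w\in V$ such that $$Y'=P\,(Y+L_{w,e_{n+2}})\,P^{-1}.$$ Moreover, in any equivalence between them (i.e. any data $P,v,p,v_0$ as in the definition of equivalence) the real number $v_0$ equals $0$.
   Context: Let $n\ge 0$ be an integer and let $\widetilde K$ be a real symmetric $n\times n$ matrix with $\widetilde K^2=I_n$. Let $V=\mathbb R^{n+2}$ with standard basis $e_1,\dots,e_{n+2}$, and let $K=\begin{pmatrix}0&0&1\\0&\widetilde K&0\\1&0&0\end{pmatrix}$ (block sizes $1,n,1$). For $x,w\in V$ write $x^*=x^TK$ and $L_{u,w}=u\,w^*-w\,u^*$. Let $O(V,K)=\{P:P^TKP=K\}$, $\mathfrak o(V,K)=\{X:X^TK+KX=0\}$, $O(V,K)_{e_{n+2}}=\{P\in O(V,K):Pe_{n+2}=e_{n+2}\}$. A special tuple is a pair $(Y,y)$ with $Y\in\mathfrak o(V,K)$, $y\in V$. Two special tuples $(Y,y)$ and $(Y',y')$ are equivalent if there exist $P\in O(V,K)_{e_{n+2}}$, vectors $v,p\in V$ with $p^*(e_{n+2})=0$, and $v_0\in\mathbb R$ such that $Y'+L_{v,e_{n+2}}=P(Y+L_{p,y})P^{-1}$ and $y'=Py+v_0e_{n+2}$. (A special tuple $(Y,e_{n+2})$ is called a standardized affine special tuple.) *)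

theory Defs
  imports "Jordan_Normal_Form.Matrix"
begin

text \<open>Setting: V = R^(n+2), realised as JNF vectors of dimension n+2 (0-based indices:
  the basis vector e_1 is index 0, e_(n+2) is index n+1).\<close>

definition Kbig :: "nat \<Rightarrow> real mat \<Rightarrow> real mat" where
  "Kbig n Kt = mat (n+2) (n+2) (\<lambda>(i,j).
     if i = 0 \<and> j = n+1 then 1
     else if i = n+1 \<and> j = 0 then 1
     else if 1 \<le> i \<and> i \<le> n \<and> 1 \<le> j \<and> j \<le> n then Kt $$ (i-1, j-1)
     else 0)"

definition elast :: "nat \<Rightarrow> real vec" where
  "elast n = unit_vec (n+2) (n+1)"

definition kstar :: "real mat \<Rightarrow> real vec \<Rightarrow> real vec \<Rightarrow> real" where
  "kstar K x w = x \<bullet> (K *\<^sub>v w)"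

text \<open>The row vector x^* = x^T K (as a vector of its entries).\<close>
definition kstar_row :: "real mat \<Rightarrow> real vec \<Rightarrow> real vec" where
  "kstar_row K x = transpose_mat K *\<^sub>v x"

definition Lmat :: "real mat \<Rightarrow> real vec \<Rightarrow> real vec \<Rightarrow> real mat" where
  "Lmat K u w = mat (dim_row K) (dim_row K)
     (\<lambda>(i,j). u $ i * kstar_row K w $ j - w $ i * kstar_row K u $ j)"

definition orth_group :: "real mat \<Rightarrow> real mat set" where
  "orth_group K = {P. P \<in> carrier_mat (dim_row K) (dim_row K) \<and> transpose_mat P * K * P = K}"

definition orth_stab :: "real mat \<Rightarrow> real vec \<Rightarrow> real mat set" where
  "orth_stab K e = {P \<in> orth_group K. P *\<^sub>v e = e}"

definition orth_alg :: "real mat \<Rightarrow> real mat set" where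
  "orth_alg K = {X. X \<in> carrier_mat (dim_row K) (dim_row K) \<and>
     transpose_mat X * K + K * X = 0\<^sub>m (dim_row K) (dim_row K)}"

definition mat_inv :: "real mat \<Rightarrow> real mat" where
  "mat_inv P = (SOME Q. Q \<in> carrier_mat (dim_row P) (dim_row P) \<and>
      P * Q = 1\<^sub>m (dim_row P) \<and> Q * P = 1\<^sub>m (dim_row P))"

definition equiv_data ::
  "real mat \<Rightarrow> real vec \<Rightarrow> real mat \<Rightarrow> real vec \<Rightarrow> real mat \<Rightarrow> real vec
   \<Rightarrow> real mat \<Rightarrow> real vec \<Rightarrow> real vec \<Rightarrow> real \<Rightarrow> bool" where
  "equiv_data K e Y y Y' y' P v p v0 \<longleftrightarrow>
     P \<in> orth_stab K e \<and>
     v \<in> carrier_vec (dim_row K) \<and> p \<in> carrier_vec (dim_row K) \<and>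
     kstar K p e = 0 \<and>
     Y' + Lmat K v e = P * (Y + Lmat K p y) * mat_inv P \<and>
     y' = P *\<^sub>v y + v0 \<cdot>\<^sub>v e"

definition special_equiv ::
  "real mat \<Rightarrow> real vec \<Rightarrow> real mat \<Rightarrow> real vec \<Rightarrow> real mat \<Rightarrow> real vec \<Rightarrow> bool" where
  "special_equiv K e Y y Y' y' \<longleftrightarrow> (\<exists>P v p v0. equiv_data K e Y y Y' y' P v p v0)"

end

theory Submission
  imports Defs "Jordan_Normal_Form.Determinant"
begin

definition colm :: "real vec \<Rightarrow> real mat" where
  "colm x = mat (dim_vec x) 1 (\<lambda>(i,j). x $ i)"

lemma colm_carrier[simp]: "x \<in> carrier_vec N \<Longrightarrow> colm x \<in> carrier_mat N 1"
  unfolding colm_def by auto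

lemma colm_dims[simp]: "dim_row (colm x) = dim_vec x" "dim_col (colm x) = 1"
  unfolding colm_def by auto

lemma col_colm[simp]: "col (colm x) 0 = x"
  by (rule eq_vecI) (auto simp: colm_def)

lemma mult_colm: assumes A: "A \<in> carrier_mat nr N" and x: "x \<in> carrier_vec N"
  shows "A * colm x = colm (A *\<^sub>v x)"
proof (rule eq_matI)
  fix i j assume ij: "i < dim_row (colm (A *\<^sub>v x))" "j < dim_col (colm (A *\<^sub>v x))"
  then have j: "j = 0" and i: "i < nr" using A by auto
  have "(A * colm x) $$ (i,j) = row A i \<bullet> col (colm x) 0"
    using i j A x by simp
  also have "\<dots> = (A *\<^sub>v x) $ i" using i A by simp
  also have "\<dots> = colm (A *\<^sub>v x) $$ (i,j)" using i j A by (simp add: colm_def)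
  finally show "(A * colm x) $$ (i,j) = colm (A *\<^sub>v x) $$ (i,j)" .
qed (use A x in auto)

lemma rowm_mult: assumes B: "B \<in> carrier_mat N nc" and x: "x \<in> carrier_vec N"
  shows "transpose_mat (colm x) * B = transpose_mat (colm (transpose_mat B *\<^sub>v x))"
proof -
  have "transpose_mat (transpose_mat B * colm x) = transpose_mat (colm x) * B"
  proof -
    have cx: "colm x \<in> carrier_mat N 1" by (rule colm_carrier[OF x])
    have Bt: "transpose_mat B \<in> carrier_mat nc N" using B by simp
    show ?thesis using transpose_mult[OF Bt cx] by simp
  qed
  then show ?thesis using mult_colm[of "transpose_mat B" nc N x] B x by simp
qed

lemma Lmat_colm: assumes K: "K \<in> carrier_mat N N" and u: "u \<in> carrier_vec N" and w: "w \<in> carrier_vec N"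
  shows "Lmat K u w = colm u * transpose_mat (colm (kstar_row K w))
     - colm w * transpose_mat (colm (kstar_row K u))"
  by (rule eq_matI) (use K u w in \<open>auto simp: Lmat_def colm_def kstar_row_def scalar_prod_def\<close>)

lemma Lmat_carrier[simp]: "K \<in> carrier_mat N N \<Longrightarrow> Lmat K u w \<in> carrier_mat N N"
  unfolding Lmat_def by auto

lemma Lmat_transport:
  assumes K: "K \<in> carrier_mat N N" and P: "P \<in> carrier_mat N N" and Q: "Q \<in> carrier_mat N N"
    and KQ: "K * Q = transpose_mat P * K"
    and u: "u \<in> carrier_vec N" and w: "w \<in> carrier_vec N"
  shows "P * Lmat K u w * Q = Lmat K (P *\<^sub>v u) (P *\<^sub>v w)"
proof -
  have kr: "kstar_row K x \<in> carrier_vec N" if "x \<in> carrier_vec N" for x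
    using K that by (simp add: kstar_row_def)
  have tq: "transpose_mat Q *\<^sub>v kstar_row K x = kstar_row K (P *\<^sub>v x)" if x: "x \<in> carrier_vec N" for x
  proof -
    have "transpose_mat Q *\<^sub>v kstar_row K x = (transpose_mat Q * transpose_mat K) *\<^sub>v x"
      using K Q x by (simp add: kstar_row_def)
    also have "transpose_mat Q * transpose_mat K = transpose_mat (K * Q)"
      using transpose_mult[OF K Q] by simp
    also have "\<dots> = transpose_mat K * P"
      unfolding KQ using transpose_mult[of "transpose_mat P" N N K N] K P by simp
    also have "(transpose_mat K * P) *\<^sub>v x = kstar_row K (P *\<^sub>v x)"
      using K P x by (simp add: kstar_row_def)
    finally show ?thesis .
  qed
  have one: "P * (colm a * transpose_mat (colm (kstar_row K b))) * Q
      = colm (P *\<^sub>v a) * transpose_mat (colm (kstar_row K (P *\<^sub>v b)))"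
    if a: "a \<in> carrier_vec N" and b: "b \<in> carrier_vec N" for a b
  proof -
    have c1: "colm a \<in> carrier_mat N 1" "transpose_mat (colm (kstar_row K b)) \<in> carrier_mat 1 N"
      using a b kr by auto
    have "P * (colm a * transpose_mat (colm (kstar_row K b))) * Q
       = (P * colm a) * (transpose_mat (colm (kstar_row K b)) * Q)"
    proof -
      have "P * (colm a * transpose_mat (colm (kstar_row K b))) = (P * colm a) * transpose_mat (colm (kstar_row K b))"
        using assoc_mult_mat[OF P c1] by simp
      moreover have "P * colm a \<in> carrier_mat N 1" using P c1 by simp
      ultimately show ?thesis using assoc_mult_mat[OF _ c1(2) Q] by simp
    qed
    also have "\<dots> = colm (P *\<^sub>v a) * transpose_mat (colm (kstar_row K (P *\<^sub>v b)))"
      unfolding mult_colm[OF P a] rowm_mult[OF Q kr[OF b]] tq[OF b] ..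
    finally show ?thesis .
  qed
  have Pu: "P *\<^sub>v u \<in> carrier_vec N" "P *\<^sub>v w \<in> carrier_vec N" using P u w by auto
  have c: "colm u * transpose_mat (colm (kstar_row K w)) \<in> carrier_mat N N"
       "colm w * transpose_mat (colm (kstar_row K u)) \<in> carrier_mat N N"
    using u w kr by auto
  have "P * Lmat K u w * Q = P * (colm u * transpose_mat (colm (kstar_row K w)))  * Q
      - P * (colm w * transpose_mat (colm (kstar_row K u))) * Q"
    unfolding Lmat_colm[OF K u w]
    using P Q c by (simp add: mult_minus_distrib_mat[of P N N _ N] minus_mult_distrib_mat[of _ N N _ _ N])
  also have "\<dots> = Lmat K (P *\<^sub>v u) (P *\<^sub>v w)"
    unfolding one[OF u w] one[OF w u] Lmat_colm[OF K Pu] ..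
  finally show ?thesis .
qed

lemma Kbig_index: "i < n+2 \<Longrightarrow> j < n+2 \<Longrightarrow> Kbig n Kt $$ (i,j) =
     (if i = 0 \<and> j = n+1 then 1
     else if i = n+1 \<and> j = 0 then 1
     else if 1 \<le> i \<and> i \<le> n \<and> 1 \<le> j \<and> j \<le> n then Kt $$ (i-1, j-1)
     else 0)"
  unfolding Kbig_def by (simp only: index_mat split: prod.splits) simp

lemma Kbig_dims[simp]: "dim_row (Kbig n Kt) = n+2" "dim_col (Kbig n Kt) = n+2"
  unfolding Kbig_def by simp_all

lemma Kbig_sym: assumes Kt: "Kt \<in> carrier_mat n n" and sym: "transpose_mat Kt = Kt"
  shows "transpose_mat (Kbig n Kt) = Kbig n Kt"
proof (rule eq_matI)
  fix i j assume ij: "i < dim_row (Kbig n Kt)" "j < dim_col (Kbig n Kt)"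
  then have i: "i < n+2" and j: "j < n+2" by simp_all
  have tr: "transpose_mat (Kbig n Kt) $$ (i, j) = Kbig n Kt $$ (j,i)"
    using i j by simp
  have e: "Kt $$ (j-1, i-1) = Kt $$ (i-1, j-1)" if "1 \<le> i" "i \<le> n" "1 \<le> j" "j \<le> n"
  proof -
    have "i - 1 < n" "j - 1 < n" using that by simp_all
    then have "transpose_mat Kt $$ (i-1, j-1) = Kt $$ (j-1, i-1)" using Kt by simp
    then show ?thesis using sym by metis
  qed
  show "transpose_mat (Kbig n Kt) $$ (i, j) = Kbig n Kt $$ (i, j)"
  proof (cases "1 \<le> i \<and> i \<le> n \<and> 1 \<le> j \<and> j \<le> n")
    case True
    then show ?thesis unfolding tr Kbig_index[OF i j] Kbig_index[OF j i] using e[of] by simp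
  next
    case False
    then have "\<not> (1 \<le> j \<and> j \<le> n \<and> 1 \<le> i \<and> i \<le> n)" by blast
    then show ?thesis unfolding tr Kbig_index[OF i j] Kbig_index[OF j i] using False by presburger
  qed
qed simp_all


lemma Kbig_sq: assumes Kt: "Kt \<in> carrier_mat n n" and sq: "Kt * Kt = 1\<^sub>m n"
  shows "Kbig n Kt * Kbig n Kt = 1\<^sub>m (n+2)"
proof (rule eq_matI)
  let ?K = "Kbig n Kt"
  fix i j assume ij: "i < dim_row (1\<^sub>m (n+2) :: real mat)" "j < dim_col (1\<^sub>m (n+2) :: real mat)"
  then have i: "i < n+2" and j: "j < n+2" by auto
  have "(?K * ?K) $$ (i,j) = (\<Sum>k\<in>{0..<n+2}. ?K $$ (i,k) * ?K $$ (k,j))"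
    using i j by (simp add: scalar_prod_def)
  also have "\<dots> = (\<Sum>k<Suc (Suc n). ?K $$ (i,k) * ?K $$ (k,j))"
    by (simp add: lessThan_atLeast0)
  also have "\<dots> = ?K $$ (i,0) * ?K $$ (0,j) + (\<Sum>k<n. ?K $$ (i,Suc k) * ?K $$ (Suc k,j))
      + ?K $$ (i,n+1) * ?K $$ (n+1,j)"
    by (subst sum.lessThan_Suc, subst sum.lessThan_Suc_shift) simp
  also have "\<dots> = 1\<^sub>m (n+2) $$ (i,j)"
  proof -
    consider "i = 0" | "i = n+1" | "1 \<le> i \<and> i \<le> n" using i by linarith
    then show ?thesis
    proof cases
      case 1
      have s: "(\<Sum>k<n. ?K $$ (i,Suc k) * ?K $$ (Suc k,j)) = 0"
        by (rule sum.neutral) (simp add: 1 Kbig_index j)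
      show ?thesis unfolding s using 1 j by (simp add: Kbig_index)
    next
      case 2
      have s: "(\<Sum>k<n. ?K $$ (i,Suc k) * ?K $$ (Suc k,j)) = 0"
        by (rule sum.neutral) (simp add: 2 Kbig_index j)
      show ?thesis unfolding s using 2 j by (simp add: Kbig_index)
    next
      case 3
      have a: "?K $$ (i,0) = 0" "?K $$ (i,n+1) = 0" using 3 by (simp_all add: Kbig_index)
      show ?thesis
      proof (cases "1 \<le> j \<and> j \<le> n")
        case True
        have "(\<Sum>k<n. ?K $$ (i,Suc k) * ?K $$ (Suc k,j)) = (\<Sum>k<n. Kt $$ (i-1,k) * Kt $$ (k,j-1))"
          by (rule sum.cong) (use 3 True in \<open>simp_all add: Kbig_index\<close>)
        also have "\<dots> = (Kt*Kt) $$ (i-1,j-1)"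
        proof -
          have d: "i-1 < n" "j-1 < n" using 3 True by auto
          show ?thesis using d Kt by (simp add: scalar_prod_def lessThan_atLeast0)
        qed
        also have "\<dots> = 1\<^sub>m (n+2) $$ (i,j)"
          unfolding sq using 3 True by auto
        finally show ?thesis unfolding a by simp
      next
        case False
        have s: "(\<Sum>k<n. ?K $$ (i,Suc k) * ?K $$ (Suc k,j)) = 0"
          by (rule sum.neutral) (use False j in \<open>auto simp: Kbig_index\<close>)
        show ?thesis unfolding s a using False 3 j by auto
      qed
    qed
  qed
  finally show "(?K * ?K) $$ (i,j) = 1\<^sub>m (n+2) $$ (i,j)" .
qed simp_all


lemma mat_inv_props:
  assumes K: "K \<in> carrier_mat N N" and KK: "K * K = 1\<^sub>m N" and P: "P \<in> orth_group K"
  shows "mat_inv P \<in> carrier_mat N N \<and> P * mat_inv P = 1\<^sub>m N \<and> mat_inv P * P = 1\<^sub>m N"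
proof -
  have Pc: "P \<in> carrier_mat N N" and PKP: "transpose_mat P * K * P = K"
    using P K unfolding orth_group_def by auto
  have Pt: "transpose_mat P \<in> carrier_mat N N" using Pc by simp
  define Q0 where "Q0 = K * transpose_mat P * K"
  have Q0c: "Q0 \<in> carrier_mat N N" unfolding Q0_def using K Pt by simp
  have "Q0 * P = K * (transpose_mat P * K * P)"
    unfolding Q0_def using K Pt Pc
    by (metis assoc_mult_mat mult_carrier_mat)
  also have "\<dots> = 1\<^sub>m N" using PKP KK by simp
  finally have Q0P: "Q0 * P = 1\<^sub>m N" .
  have PQ0: "P * Q0 = 1\<^sub>m N" using mat_mult_left_right_inverse[OF Q0c Pc Q0P] .
  have dr: "dim_row P = N" using Pc by simp
  have "\<exists>Q. Q \<in> carrier_mat (dim_row P) (dim_row P) \<and> P * Q = 1\<^sub>m (dim_row P) \<and> Q * P = 1\<^sub>m (dim_row P)"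
    using Q0c PQ0 Q0P dr by auto
  from someI_ex[OF this] show ?thesis unfolding mat_inv_def dr .
qed

lemma KQ_lemma:
  fixes K P Q :: "real mat"
  assumes K: "K \<in> carrier_mat N N" and Pc: "P \<in> carrier_mat N N" and Q: "Q \<in> carrier_mat N N"
    and PKP: "transpose_mat P * K * P = K" and PQ: "P * Q = 1\<^sub>m N"
  shows "K * Q = transpose_mat P * K"
proof -
  have Pt: "transpose_mat P \<in> carrier_mat N N" using Pc by simp
  have PKc: "transpose_mat P * K \<in> carrier_mat N N" using Pt K by simp
  have "transpose_mat P * K = transpose_mat P * K * (P * Q)" unfolding PQ
    using right_mult_one_mat[OF PKc] by simp
  also have "\<dots> = (transpose_mat P * K * P) * Q"
    using Pt K Pc Q by (metis assoc_mult_mat mult_carrier_mat)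
  finally show ?thesis using PKP by simp
qed

lemma Lmat_minus: assumes K: "K \<in> carrier_mat N N" and a: "a \<in> carrier_vec N" and b: "b \<in> carrier_vec N"
  and w: "w \<in> carrier_vec N"
  shows "Lmat K (a - b) w = Lmat K a w - Lmat K b w"
proof -
  have d: "dim_vec (kstar_row K x) = N" for x using K by (simp add: kstar_row_def)
  have ab: "kstar_row K (a - b) = kstar_row K a - kstar_row K b"
    unfolding kstar_row_def using K a b by (simp add: mult_minus_distrib_mat_vec[of _ N N])
  have ix: "kstar_row K (a - b) $ j = kstar_row K a $ j - kstar_row K b $ j" if "j < N" for j
    unfolding ab using that d by simp
  show ?thesis
  proof (rule eq_matI)
    fix i j assume "i < dim_row (Lmat K a w - Lmat K b w)" "j < dim_col (Lmat K a w - Lmat K b w)"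
    then have i: "i < N" and j: "j < N" using K by (auto simp: Lmat_def)
    have "Lmat K (a - b) w $$ (i, j) = (a $ i - b $ i) * kstar_row K w $ j
       - w $ i * (kstar_row K a $ j - kstar_row K b $ j)"
      using i j K a b by (simp add: Lmat_def ix)
    also have "\<dots> = (Lmat K a w - Lmat K b w) $$ (i, j)"
      using i j K by (simp add: Lmat_def algebra_simps)
    finally show "Lmat K (a - b) w $$ (i, j) = (Lmat K a w - Lmat K b w) $$ (i, j)" .
  qed (use K in \<open>auto simp: Lmat_def\<close>)
qed

lemma Lmat_uminus: assumes K: "K \<in> carrier_mat N N" and a: "a \<in> carrier_vec N"
  and w: "w \<in> carrier_vec N"
  shows "Lmat K (- a) w = - Lmat K a w"
proof -
  have e1: "Lmat K (- a) w = Lmat K (0\<^sub>v N - a) w" using a by simp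
  have z: "Lmat K (0\<^sub>v N) w = 0\<^sub>m N N"
    by (intro eq_matI) (use K w in \<open>auto simp: Lmat_def kstar_row_def\<close>)
  have e2: "Lmat K (0\<^sub>v N - a) w = 0\<^sub>m N N - Lmat K a w"
    using Lmat_minus[OF K _ a w, of "0\<^sub>v N"] z by simp
  have L: "Lmat K a w \<in> carrier_mat N N" using K by simp
  have e3: "0\<^sub>m N N - Lmat K a w = - Lmat K a w"
    using L by (intro eq_matI) auto
  show ?thesis unfolding e1 e2 e3 ..
qed

lemma Lmat_zero: assumes K: "K \<in> carrier_mat N N" and w: "w \<in> carrier_vec N"
  shows "Lmat K (0\<^sub>v N) w = 0\<^sub>m N N"
  by (intro eq_matI) (use K w in \<open>auto simp: Lmat_def kstar_row_def\<close>)

lemma mat_add_minus_cancel: "A \<in> carrier_mat N N \<Longrightarrow> B \<in> carrier_mat N N \<Longrightarrow> (A + B) - B = (A :: real mat)"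
  by (intro eq_matI) auto

lemma mat_add_uminus_cancel: "A \<in> carrier_mat N N \<Longrightarrow> B \<in> carrier_mat N N \<Longrightarrow> (A + B) + (- B) = (A :: real mat)"
  by (intro eq_matI) auto

lemma mat_add_minus_assoc: "A \<in> carrier_mat N N \<Longrightarrow> B \<in> carrier_mat N N \<Longrightarrow> C \<in> carrier_mat N N \<Longrightarrow>
   A + (B - C) = (A + B) - (C :: real mat)"
  by (intro eq_matI) auto


theorem lemma7:
  fixes n :: nat and Kt Y Y' :: "real mat"
  assumes Kt_carrier: "Kt \<in> carrier_mat n n"
    and Kt_sym: "transpose_mat Kt = Kt"
    and Kt_sq: "Kt * Kt = 1\<^sub>m n"
    and Y: "Y \<in> orth_alg (Kbig n Kt)"
    and Y': "Y' \<in> orth_alg (Kbig n Kt)"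
  shows "(special_equiv (Kbig n Kt) (elast n) Y (elast n) Y' (elast n) \<longleftrightarrow>
           (\<exists>P \<in> orth_stab (Kbig n Kt) (elast n). \<exists>w \<in> carrier_vec (n+2).
              Y' = P * (Y + Lmat (Kbig n Kt) w (elast n)) * mat_inv P))
      \<and> (\<forall>P v p v0. equiv_data (Kbig n Kt) (elast n) Y (elast n) Y' (elast n) P v p v0
           \<longrightarrow> v0 = 0)"
proof -
  define N where "N = n + 2"
  define K where "K = Kbig n Kt"
  define e where "e = elast n"
  have Kc: "K \<in> carrier_mat N N" unfolding K_def N_def carrier_mat_def by simp
  have KK: "K * K = 1\<^sub>m N" unfolding K_def N_def by (rule Kbig_sq[OF Kt_carrier Kt_sq])
  have dK: "dim_row K = N" using Kc by simp
  have ec: "e \<in> carrier_vec N" unfolding e_def elast_def N_def by simp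
  have Yc: "Y \<in> carrier_mat N N" and Y'c: "Y' \<in> carrier_mat N N"
    using Y Y' dK unfolding orth_alg_def K_def by auto
  have stab: "P \<in> carrier_mat N N \<and> transpose_mat P * K * P = K \<and> P *\<^sub>v e = e \<and>
      mat_inv P \<in> carrier_mat N N \<and> P * mat_inv P = 1\<^sub>m N \<and> mat_inv P * P = 1\<^sub>m N \<and>
      K * mat_inv P = transpose_mat P * K"
    if P: "P \<in> orth_stab K e" for P
  proof -
    have Pg: "P \<in> orth_group K" and Pe: "P *\<^sub>v e = e" using P unfolding orth_stab_def by auto
    have Pc: "P \<in> carrier_mat N N" and PKP: "transpose_mat P * K * P = K"
      using Pg dK unfolding orth_group_def by auto
    have inv: "mat_inv P \<in> carrier_mat N N \<and> P * mat_inv P = 1\<^sub>m N \<and> mat_inv P * P = 1\<^sub>m N"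
      by (rule mat_inv_props[OF Kc KK Pg])
    have "K * mat_inv P = transpose_mat P * K"
      using KQ_lemma[OF Kc Pc _ PKP] inv by blast
    then show ?thesis using Pc PKP Pe inv by blast
  qed
  have part2: "v0 = 0" if ed: "equiv_data K e Y e Y' e P v p v0" for P v p v0
  proof -
    have P: "P \<in> orth_stab K e" and ye: "e = P *\<^sub>v e + v0 \<cdot>\<^sub>v e"
      using ed unfolding equiv_data_def by auto
    then have "e = e + v0 \<cdot>\<^sub>v e" using stab[OF P] by simp
    then have "e $ (n+1) = (e + v0 \<cdot>\<^sub>v e) $ (n+1)" by simp
    then have "1 = 1 + v0" unfolding e_def elast_def by simp
    then show ?thesis by simp
  qed
  have fwd: "\<exists>P \<in> orth_stab K e. \<exists>w \<in> carrier_vec (n+2). Y' = P * (Y + Lmat K w e) * mat_inv P"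
    if "special_equiv K e Y e Y' e"
  proof -
    from that obtain P v p v0 where ed: "equiv_data K e Y e Y' e P v p v0"
      unfolding special_equiv_def by blast
    have P: "P \<in> orth_stab K e" and vc: "v \<in> carrier_vec N" and pc: "p \<in> carrier_vec N"
      and eq: "Y' + Lmat K v e = P * (Y + Lmat K p e) * mat_inv P"
      using ed dK unfolding equiv_data_def by auto
    define Q where "Q = mat_inv P"
    have Pc: "P \<in> carrier_mat N N" and Pe: "P *\<^sub>v e = e" and Qc: "Q \<in> carrier_mat N N"
      and PQ: "P * Q = 1\<^sub>m N" and KQ: "K * Q = transpose_mat P * K"
      using stab[OF P] unfolding Q_def by auto
    define u where "u = Q *\<^sub>v v"
    have uc: "u \<in> carrier_vec N" unfolding u_def using Qc vc by simp
    have Pu: "P *\<^sub>v u = v" unfolding u_def using Pc Qc vc PQ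
      by (metis assoc_mult_mat_vec one_mult_mat_vec)
    have TL: "P * Lmat K u e * Q = Lmat K v e"
      using Lmat_transport[OF Kc Pc Qc KQ uc ec] Pu Pe by simp
    define w where "w = p - u"
    have wc: "w \<in> carrier_vec N" unfolding w_def using pc uc by simp
    have Lc: "Lmat K x e \<in> carrier_mat N N" for x using Kc by simp
    have "Y + Lmat K w e = (Y + Lmat K p e) - Lmat K u e"
      unfolding w_def Lmat_minus[OF Kc pc uc ec]
      by (rule mat_add_minus_assoc[OF Yc Lc Lc])
    then have "P * (Y + Lmat K w e) * Q = P * (Y + Lmat K p e) * Q - P * Lmat K u e * Q"
      using Pc Qc Yc Lc
      by (simp add: mult_minus_distrib_mat[of P N N _ N] minus_mult_distrib_mat[of _ N N _ _ N])
    also have "\<dots> = Y'"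
      unfolding TL unfolding Q_def eq[symmetric] by (rule mat_add_minus_cancel[OF Y'c Lc])
    finally have "Y' = P * (Y + Lmat K w e) * mat_inv P" unfolding Q_def by simp
    then show ?thesis using P wc N_def by blast
  qed
  have bwd: "special_equiv K e Y e Y' e"
    if "\<exists>P \<in> orth_stab K e. \<exists>w \<in> carrier_vec (n+2). Y' = P * (Y + Lmat K w e) * mat_inv P"
  proof -
    from that obtain P w where P: "P \<in> orth_stab K e" and wc: "w \<in> carrier_vec N"
      and eq: "Y' = P * (Y + Lmat K w e) * mat_inv P" unfolding N_def by blast
    define Q where "Q = mat_inv P"
    have Pc: "P \<in> carrier_mat N N" and Pe: "P *\<^sub>v e = e" and Qc: "Q \<in> carrier_mat N N"
      and PQ: "P * Q = 1\<^sub>m N" and KQ: "K * Q = transpose_mat P * K"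
      using stab[OF P] unfolding Q_def by auto
    have Lc: "Lmat K x e \<in> carrier_mat N N" for x using Kc by simp
    have Pwc: "P *\<^sub>v w \<in> carrier_vec N" using Pc wc by simp
    have TL: "P * Lmat K w e * Q = Lmat K (P *\<^sub>v w) e"
      using Lmat_transport[OF Kc Pc Qc KQ wc ec] Pe by simp
    have Y'eq: "Y' = P * Y * Q + Lmat K (P *\<^sub>v w) e"
      unfolding eq Q_def[symmetric] TL[symmetric] using Pc Qc Yc Lc
      by (simp add: mult_add_distrib_mat[of P N N _ N] add_mult_distrib_mat[of _ N N _ _ N])
    have PYQc: "P * Y * Q \<in> carrier_mat N N" using Pc Qc Yc by simp
    have "Y' + Lmat K (- (P *\<^sub>v w)) e = P * Y * Q"
      unfolding Lmat_uminus[OF Kc Pwc ec] Y'eq by (rule mat_add_uminus_cancel[OF PYQc Lc])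
    also have "\<dots> = P * (Y + Lmat K (0\<^sub>v N) e) * Q"
      unfolding Lmat_zero[OF Kc ec] using Yc by simp
    finally have E: "Y' + Lmat K (- (P *\<^sub>v w)) e = P * (Y + Lmat K (0\<^sub>v N) e) * mat_inv P"
      unfolding Q_def .
    have k0: "kstar K (0\<^sub>v N) e = 0" unfolding kstar_def using Kc ec by simp
    have ye: "e = P *\<^sub>v e + 0 \<cdot>\<^sub>v e" unfolding Pe by (rule eq_vecI) (use ec in auto)
    have "equiv_data K e Y e Y' e P (- (P *\<^sub>v w)) (0\<^sub>v N) 0"
      unfolding equiv_data_def using P Pwc k0 E ye dK by simp
    then show ?thesis unfolding special_equiv_def by blast
  qed
  show ?thesis
    using fwd bwd part2 unfolding K_def[symmetric] e_def[symmetric] by blast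
qed

end
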